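(* Let $g$ be a connected graph, let $\varphi$ be a set of pairwise non-crossing minimal separators of $g$, and let $S\in\varphi$ be a clique of $g$. Let $c_1,\dots,c_k$ be the connected components of $g\setminus S$ and let $\mathcal{C}(S)=\{g_{|V(c_i)\cup N_g(V(c_i))}: 1\le i\le k\}$. Then: (1) neither $S$ nor any subset of $S$ is a minimal separator of any graph in $\mathcal{C}(S)$; (2) for every $S'\in\varphi\setminus\{S\}$ there exists $c\in\mathcal{C}(S)$ with $S'\subseteq V(c)$.
   Context: Graphs are finite, simple and undirected. $g_{|U}$ is the subgraph induced by $U$, $g\setminus S=g_{|V(g)\setminus S}$, and $N_g(U)=\bigcup_{v\in U}N_g(v)\setminus U$. For nodes $u,v$, a set $S\subseteq V(g)$ is a $(u,v)$-separator if $u,v$ lie in distinct connected components of $g\setminus S$; it is a minimal $(u,v)$-separator if no proper subset is one; $S$ is a minimal separator if it is a minimal $(u,v)$-separator for some $u,v$. Two minimal separators $S,T$ cross if there are $u,v\in T$ such that $S$ is a $(u,v)$-separator. *)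

theory Defs
  imports Main
begin

type_synonym 'a graph = "'a set \<times> 'a set set"

definition verts :: "'a graph \<Rightarrow> 'a set" where "verts g = fst g"
definition edges :: "'a graph \<Rightarrow> 'a set set" where "edges g = snd g"

definition wf_graph :: "'a graph \<Rightarrow> bool" where
  "wf_graph g \<longleftrightarrow> finite (verts g) \<and>
     (\<forall>e\<in>edges g. e \<subseteq> verts g \<and> card e = 2)"

definition adj :: "'a graph \<Rightarrow> 'a \<Rightarrow> 'a \<Rightarrow> bool" where
  "adj g u v \<longleftrightarrow> {u, v} \<in> edges g"

definition induced :: "'a graph \<Rightarrow> 'a set \<Rightarrow> 'a graph" where
  "induced g U = (verts g \<inter> U, {e \<in> edges g. e \<subseteq> U})"

definition remove :: "'a graph \<Rightarrow> 'a set \<Rightarrow> 'a graph" where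
  "remove g S = induced g (verts g - S)"

definition nbh :: "'a graph \<Rightarrow> 'a set \<Rightarrow> 'a set" where
  "nbh g U = (\<Union>v\<in>U. {w \<in> verts g. adj g v w}) - U"

definition reach :: "'a graph \<Rightarrow> 'a \<Rightarrow> 'a \<Rightarrow> bool" where
  "reach g u v \<longleftrightarrow> u \<in> verts g \<and> v \<in> verts g \<and>
     (\<lambda>x y. x \<in> verts g \<and> y \<in> verts g \<and> adj g x y)\<^sup>*\<^sup>* u v"

definition connected_graph :: "'a graph \<Rightarrow> bool" where
  "connected_graph g \<longleftrightarrow> (\<forall>u\<in>verts g. \<forall>v\<in>verts g. reach g u v)"

definition components :: "'a graph \<Rightarrow> 'a set set" where
  "components g = {{v. reach g u v} | u. u \<in> verts g}"

definition is_clique :: "'a graph \<Rightarrow> 'a set \<Rightarrow> bool" where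
  "is_clique g S \<longleftrightarrow> S \<subseteq> verts g \<and> (\<forall>u\<in>S. \<forall>v\<in>S. u \<noteq> v \<longrightarrow> adj g u v)"

definition separator :: "'a graph \<Rightarrow> 'a \<Rightarrow> 'a \<Rightarrow> 'a set \<Rightarrow> bool" where
  "separator g u v S \<longleftrightarrow> S \<subseteq> verts g \<and>
     u \<in> verts (remove g S) \<and> v \<in> verts (remove g S) \<and> \<not> reach (remove g S) u v"

definition min_separator_uv :: "'a graph \<Rightarrow> 'a \<Rightarrow> 'a \<Rightarrow> 'a set \<Rightarrow> bool" where
  "min_separator_uv g u v S \<longleftrightarrow> separator g u v S \<and> (\<forall>T. T \<subset> S \<longrightarrow> \<not> separator g u v T)"

definition min_separator :: "'a graph \<Rightarrow> 'a set \<Rightarrow> bool" where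
  "min_separator g S \<longleftrightarrow> (\<exists>u v. min_separator_uv g u v S)"

definition crosses :: "'a graph \<Rightarrow> 'a set \<Rightarrow> 'a set \<Rightarrow> bool" where
  "crosses g S T \<longleftrightarrow> (\<exists>u\<in>T. \<exists>v\<in>T. separator g u v S)"

definition comp_graphs :: "'a graph \<Rightarrow> 'a set \<Rightarrow> 'a graph set" where
  "comp_graphs g S = {induced g (C \<union> nbh g C) | C. C \<in> components (remove g S)}"

end

theory Submission
  imports Defs
begin

lemma verts_induced[simp]: "verts (induced g U) = verts g \<inter> U"
  by (simp add: induced_def verts_def)
lemma adj_induced[simp]: "adj (induced g U) x y \<longleftrightarrow> adj g x y \<and> x \<in> U \<and> y \<in> U"
  by (auto simp: adj_def edges_def induced_def)
lemma remove_eq: "remove g S = induced g (verts g - S)"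
  by (simp add: remove_def)
lemma induced_induced: "induced (induced g U) W = induced g (U \<inter> W)"
  by (auto simp: induced_def verts_def edges_def)
lemma adj_sym: "adj g x y \<Longrightarrow> adj g y x"
  by (simp add: adj_def insert_commute)

lemma reach_refl: "v \<in> verts h \<Longrightarrow> reach h v v"
  by (simp add: reach_def)

lemma reach_verts: "reach h u v \<Longrightarrow> u \<in> verts h \<and> v \<in> verts h"
  by (simp add: reach_def)

lemma reach_step: "reach h u v \<Longrightarrow> adj h v w \<Longrightarrow> w \<in> verts h \<Longrightarrow> reach h u w"
  unfolding reach_def by (auto intro: rtranclp.rtrancl_into_rtrancl)

lemma reach_trans: "reach h u v \<Longrightarrow> reach h v w \<Longrightarrow> reach h u w"
  unfolding reach_def by auto

lemma reach_sym: "reach h u v \<Longrightarrow> reach h v u"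
proof -
  let ?R = "\<lambda>x y. x \<in> verts h \<and> y \<in> verts h \<and> adj h x y"
  assume a: "reach h u v"
  have "?R\<^sup>*\<^sup>* u v" using a by (simp add: reach_def)
  hence "?R\<^sup>*\<^sup>* v u"
    by (induction rule: rtranclp_induct) (auto intro: converse_rtranclp_into_rtranclp adj_sym)
  thus ?thesis using a by (simp add: reach_def)
qed

lemma reach_induct[consumes 1, case_names refl step]:
  assumes "reach h u v" "P u"
    "\<And>y z. reach h u y \<Longrightarrow> P y \<Longrightarrow> adj h y z \<Longrightarrow> z \<in> verts h \<Longrightarrow> P z"
  shows "P v"
proof -
  let ?R = "\<lambda>x y. x \<in> verts h \<and> y \<in> verts h \<and> adj h x y"
  have u: "u \<in> verts h" using assms(1) by (simp add: reach_def)
  have "?R\<^sup>*\<^sup>* u v" using assms(1) by (simp add: reach_def)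
  thus ?thesis
  proof (induction rule: rtranclp_induct)
    case base then show ?case using assms(2) .
  next
    case (step y z)
    have "reach h u y" using u step by (simp add: reach_def)
    then show ?case using step assms(3) by blast
  qed
qed

lemma reach_restrict:
  assumes "reach (induced g U) u v" "\<forall>w. reach (induced g U) u w \<longrightarrow> w \<in> W"
  shows "reach (induced g W) u v"
  using assms(1)
proof (induction rule: reach_induct)
  case refl
  have "reach (induced g U) u u" using reach_refl[OF conjunct1[OF reach_verts[OF assms(1)]]] .
  hence "u \<in> W" using assms(2) by blast
  moreover have "u \<in> verts g" using conjunct1[OF reach_verts[OF assms(1)]] by simp
  ultimately
  show ?case by (intro reach_refl) simp
next
  case (step y z)
  have "reach (induced g U) u z" using reach_step[OF step(1) step(2) step(3)] .
  hence "z \<in> W" using assms(2) by blast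
  moreover have "y \<in> W" using reach_verts[OF step(4)] by simp
  moreover have "adj g y z" "z \<in> verts g" using step(2,3) by simp_all
  ultimately show ?case by (intro reach_step[OF step(4)]) auto
qed

lemma min_sep_sym: "min_separator_uv g a b T \<Longrightarrow> min_separator_uv g b a T"
  unfolding min_separator_uv_def separator_def by (meson reach_sym)

lemma key:
  assumes "min_separator_uv g a b T" "x \<in> T"
  shows "\<exists>y. adj g x y \<and> reach (remove g T) a y"
proof (rule ccontr)
  assume nx: "\<not> ?thesis"
  have sep: "separator g a b T" using assms(1) by (simp add: min_separator_uv_def)
  have "\<not> separator g a b (T - {x})" using assms by (auto simp: min_separator_uv_def)
  moreover have "T - {x} \<subseteq> verts g" "a \<in> verts (remove g (T - {x}))" "b \<in> verts (remove g (T - {x}))"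
    using sep by (auto simp: separator_def remove_eq)
  ultimately have r: "reach (remove g (T - {x})) a b" by (simp add: separator_def)
  have "reach (remove g T) a b"
    using r unfolding remove_eq
  proof (induction rule: reach_induct)
    case refl then show ?case using sep by (intro reach_refl) (auto simp: separator_def remove_eq)
  next
    case (step y z)
    have az: "adj g y z" using step(2) by simp
    have zv: "z \<in> verts g" using step(3) by simp
    have ry: "reach (induced g (verts g - T)) a y" using step(4) .
    have "z \<noteq> x"
    proof
      assume zx: "z = x"
      have "adj g x y" using adj_sym[OF az] zx by simp
      thus False using nx ry by (simp add: remove_eq)
    qed
    hence "z \<notin> T" using step(3) by simp
    moreover have "y \<in> verts g - T" using reach_verts[OF ry] by simp
    ultimately show ?case using az zv by (intro reach_step[OF ry]) auto
  qed
  thus False using sep by (simp add: separator_def)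
qed

lemma reach_rem: "reach (remove g S) u v \<Longrightarrow> u \<in> verts g \<and> u \<notin> S \<and> v \<in> verts g \<and> v \<notin> S"
  using reach_verts[of "remove g S" u v] by (simp add: remove_eq)

lemma part1:
  assumes "C \<in> components (remove g S)" "T \<subseteq> S"
  shows "\<not> min_separator (induced g (C \<union> nbh g C)) T"
proof
  assume "min_separator (induced g (C \<union> nbh g C)) T"
  then obtain u v where sp: "separator (induced g (C \<union> nbh g C)) u v T"
    by (auto simp: min_separator_def min_separator_uv_def)
  obtain u0 where u0: "u0 \<in> verts g" "u0 \<notin> S" "C = {v. reach (remove g S) u0 v}"
    using assms(1) by (auto simp: components_def remove_eq)
  define W where "W = (C \<union> nbh g C) \<inter> (verts g \<inter> (C \<union> nbh g C) - T)"
  have rc: "remove (induced g (C \<union> nbh g C)) T = induced g W"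
    unfolding W_def remove_eq by (simp add: induced_induced)
  have Cs: "w \<in> verts g \<and> w \<notin> S" if "w \<in> C" for w
    using that u0(3) reach_rem[of g S u0 w] by simp
  have Csub: "C \<subseteq> W" using Cs assms(2) by (auto simp: W_def)
  have rC: "reach (induced g W) u0 w" if "w \<in> C" for w
  proof (rule reach_restrict[of g "verts g - S"])
    show "reach (induced g (verts g - S)) u0 w" using that u0 by (simp add: remove_eq)
    show "\<forall>w. reach (induced g (verts g - S)) u0 w \<longrightarrow> w \<in> W"
      using Csub u0 by (auto simp: remove_eq)
  qed
  have all: "reach (induced g W) u0 w" if "w \<in> verts (induced g W)" for w
  proof (cases "w \<in> C")
    case True then show ?thesis using rC by blast
  next
    case False
    then have "w \<in> nbh g C" "w \<in> W" "w \<in> verts g" using that by (auto simp: W_def)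
    then obtain y where y: "y \<in> C" "adj g y w" by (auto simp: nbh_def)
    show ?thesis using rC[OF y(1)] y Csub \<open>w \<in> W\<close> \<open>w \<in> verts g\<close>
      by (intro reach_step[OF rC[OF y(1)]]) auto
  qed
  have "u \<in> verts (induced g W)" "v \<in> verts (induced g W)" using sp rc by (auto simp: separator_def)
  hence "reach (induced g W) u v" using reach_trans[OF reach_sym[OF all] all] by blast
  thus False using sp rc by (simp add: separator_def)
qed

theorem lemma6:
  fixes g :: "'a graph" and \<phi> :: "'a set set" and S :: "'a set"
  assumes "wf_graph g"
    and "connected_graph g"
    and "\<forall>T\<in>\<phi>. min_separator g T"
    and "\<forall>T\<in>\<phi>. \<forall>T'\<in>\<phi>. T \<noteq> T' \<longrightarrow> \<not> crosses g T T'"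
    and "S \<in> \<phi>"
    and "is_clique g S"
  shows "(\<forall>c\<in>comp_graphs g S. \<forall>T. T \<subseteq> S \<longrightarrow> \<not> min_separator c T)
       \<and> (\<forall>S'\<in>\<phi> - {S}. \<exists>c\<in>comp_graphs g S. S' \<subseteq> verts c)"
proof
  show "\<forall>c\<in>comp_graphs g S. \<forall>T. T \<subseteq> S \<longrightarrow> \<not> min_separator c T"
  proof (intro ballI allI impI)
    fix c T assume "c \<in> comp_graphs g S" "T \<subseteq> S"
    then obtain C where "c = induced g (C \<union> nbh g C)" "C \<in> components (remove g S)"
      unfolding comp_graphs_def by blast
    then show "\<not> min_separator c T" using part1 \<open>T \<subseteq> S\<close> by simp
  qed
next
  show "\<forall>S'\<in>\<phi> - {S}. \<exists>c\<in>comp_graphs g S. S' \<subseteq> verts c"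
  proof
    fix S' assume S': "S' \<in> \<phi> - {S}"
    obtain a b where ab: "min_separator_uv g a b S"
      using assms(3,5) by (auto simp: min_separator_def)
    obtain a' b' where ab': "min_separator_uv g a' b' S'"
      using assms(3) S' unfolding min_separator_def by blast
    have Sv: "S \<subseteq> verts g" using ab by (simp add: min_separator_uv_def separator_def)
    have S'v: "S' \<subseteq> verts g" using ab' by (simp add: min_separator_uv_def separator_def)
    have nc1: "\<not> crosses g S S'" and nc2: "\<not> crosses g S' S" using assms(4,5) S' by auto
    have compI: "induced g (C \<union> nbh g C) \<in> comp_graphs g S" if "u \<in> verts g" "u \<notin> S"
      "C = {v. reach (remove g S) u v}" for u C
      using that unfolding comp_graphs_def components_def by (auto simp: remove_eq)
    show "\<exists>c\<in>comp_graphs g S. S' \<subseteq> verts c"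
    proof (cases "S' \<subseteq> S")
      case True
      have a: "a \<in> verts g" "a \<notin> S" using ab by (auto simp: min_separator_uv_def separator_def remove_eq)
      define C where "C = {v. reach (remove g S) a v}"
      have "S' \<subseteq> verts (induced g (C \<union> nbh g C))"
      proof
        fix x assume x: "x \<in> S'"
        then obtain y where y: "adj g x y" "reach (remove g S) a y" using key[OF ab] True by blast
        have "y \<in> verts g" using reach_rem[OF y(2)] by simp
        moreover have "x \<notin> C" using x True reach_rem[of g S a x] by (auto simp: C_def)
        moreover have "x \<in> verts g" using x S'v by auto
        ultimately have "x \<in> nbh g C" unfolding nbh_def using y(2) adj_sym[OF y(1)] by (auto simp: C_def)
        thus "x \<in> verts (induced g (C \<union> nbh g C))" using x S'v by auto
      qed
      thus ?thesis using compI[OF a C_def] by blast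
    next
      case False
      then obtain c0 where c0: "c0 \<in> S'" "c0 \<notin> S" by blast
      have c0v: "c0 \<in> verts g" using c0 S'v by auto
      define C where "C = {v. reach (remove g S) c0 v}"
      have inC: "v \<in> C" if "v \<in> S'" "v \<notin> S" for v
      proof (rule ccontr)
        assume "v \<notin> C"
        hence "separator g c0 v S" using that c0 c0v S'v Sv
          by (auto simp: separator_def C_def remove_eq)
        thus False using nc1 c0 that by (auto simp: crosses_def)
      qed
      have "\<exists>\<alpha> \<beta>. min_separator_uv g \<alpha> \<beta> S' \<and> (\<forall>w. reach (remove g S') \<beta> w \<longrightarrow> w \<notin> S)"
      proof (rule ccontr)
        assume "\<not> ?thesis"
        then obtain p q where pq: "reach (remove g S') b' q" "q \<in> S" "reach (remove g S') a' p" "p \<in> S"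
          using ab' min_sep_sym[OF ab'] by blast
        have "\<not> reach (remove g S') p q"
        proof
          assume pq0: "reach (remove g S') p q"
          have "reach (remove g S') a' b'" using reach_trans[OF reach_trans[OF pq(3) pq0] reach_sym[OF pq(1)]] .
          thus False using ab' by (simp add: min_separator_uv_def separator_def)
        qed
        hence "separator g p q S'" using pq S'v reach_rem[OF pq(1)] reach_rem[OF pq(3)] by (simp add: separator_def remove_eq)
        thus False using nc2 pq(2,4) unfolding crosses_def by blast
      qed
      then obtain \<alpha> \<beta> where ms0: "min_separator_uv g \<alpha> \<beta> S'"
        and avoid: "\<forall>w. reach (remove g S') \<beta> w \<longrightarrow> w \<notin> S"
        by blast
      have ms: "min_separator_uv g \<beta> \<alpha> S'" using min_sep_sym[OF ms0] .
      have "S' \<subseteq> verts (induced g (C \<union> nbh g C))"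
      proof
        fix x assume x: "x \<in> S'"
        show "x \<in> verts (induced g (C \<union> nbh g C))"
        proof (cases "x \<in> S")
          case False then show ?thesis using inC x S'v by auto
        next
          case True
          obtain w where w: "adj g c0 w" "reach (remove g S') \<beta> w" using key[OF ms c0(1)] by blast
          obtain w' where w': "adj g x w'" "reach (remove g S') \<beta> w'" using key[OF ms x] by blast
          have r1: "reach (remove g S') w' w" using reach_trans[OF reach_sym[OF w'(2)] w(2)] .
          have r2: "reach (remove g S) w' w" unfolding remove_eq
          proof (rule reach_restrict)
            show "reach (induced g (verts g - S')) w' w" using r1 unfolding remove_eq .
            show "\<forall>v. reach (induced g (verts g - S')) w' v \<longrightarrow> v \<in> verts g - S"
            proof (intro allI impI)
              fix v assume hv: "reach (induced g (verts g - S')) w' v"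
              have "reach (remove g S') w' v" unfolding remove_eq by (rule hv)
              hence bv: "reach (remove g S') \<beta> v" by (rule reach_trans[OF w'(2)])
              have "v \<notin> S" using avoid bv by blast
              moreover have "v \<in> verts g" using reach_rem[OF bv] by simp
              ultimately show "v \<in> verts g - S" by simp
            qed
          qed
          have "reach (remove g S) w' c0"
            using c0 c0v adj_sym[OF w(1)] reach_rem[OF r2]
            by (intro reach_step[OF r2]) (auto simp: remove_eq)
          hence "w' \<in> C" using reach_sym by (simp add: C_def)
          moreover have "x \<notin> C" using True reach_rem[of g S c0 x] by (auto simp: C_def)
          moreover have "w' \<in> verts g" using reach_rem[OF w'(2)] by simp
          moreover have "x \<in> verts g" using x S'v by auto
          ultimately have "x \<in> nbh g C" unfolding nbh_def using adj_sym[OF w'(1)] by auto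
          thus ?thesis using x S'v by auto
        qed
      qed
      thus ?thesis using compI[OF c0v c0(2) C_def] by blast
    qed
  qed
qed

end
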